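(* Let $z^0\in X$, $\gamma\in(0,2)$, $\delta\in[0,1/2)$, and let $\{\sigma_k\},\{\eta_k\}$ be nonnegative with $\sum_k\eta_k<\infty$, $\inf_k\sigma_k>0$; let $z^{k+1}$ be an output of IGPPAstep$(z^k,\sigma_k,\eta_k,\delta,\gamma,M)$ for all $k\ge0$. Assume $T$ satisfies the bounded metric subregularity condition, let $\bar z^0$ be a point of $\Omega$ nearest to $z^0$ in $\|\cdot\|_M$, let $r\ge\|\bar z^0\|+\frac{1}{\lambda_{\min}(M)}(\operatorname{dist}_M(z^0,\Omega)+\gamma\sum_k\eta_k)$ and $\kappa_r>0$ with $\operatorname{dist}(z,\Omega)\le\kappa_r\operatorname{dist}(0,T(z))$ for $\|z\|\le r$. Then for every $k\ge0$, $$\frac{1-\delta}{\gamma}\|z^{k+1}-z^k\|_M\le\operatorname{dist}_M(z^k,\Omega)\le\frac{1+\delta}{\gamma\Big(1-\sqrt{\frac{\kappa_r^2}{\sigma_k^2+\kappa_r^2}}\Big)}\|z^{k+1}-z^k\|_M.$$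
   Context: $X$ is a finite-dimensional real Hilbert space; $T:X\rightrightarrows X$ is maximal monotone with $\Omega:=T^{-1}(0)\neq\emptyset$. $M$ is self-adjoint positive definite with $\lambda_{\max}(M)=1$; $\|z\|_M=\sqrt{\langle z,Mz\rangle}$, $\operatorname{dist}_M(z,D)=\min_{d\in D}\|d-z\|_M$, $\operatorname{dist}=\operatorname{dist}_I$. $\mathcal{J}_{\sigma M^{-1}T}:=(I+\sigma M^{-1}T)^{-1}$. $z^+$ is an output of IGPPAstep$(z,\sigma,\eta,\delta,\gamma,M)$ if $z^+=\gamma w+(1-\gamma)z$ for some $w$ with $\|w-\mathcal{J}_{\sigma M^{-1}T}(z)\|_M\le\min\{\eta,\delta\|w-z\|_M\}$. Bounded metric subregularity: for every $r>0$ there is $\kappa_r>0$ with $\operatorname{dist}(z,\Omega)\le\kappa_r\operatorname{dist}(0,T(z))$ for all $\|z\|\le r$. *)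

theory Defs
  imports "HOL-Analysis.Analysis"
begin

definition monotone_op :: "('a::real_inner \<Rightarrow> 'a set) \<Rightarrow> bool" where
  "monotone_op T \<longleftrightarrow> (\<forall>x y u v. u \<in> T x \<longrightarrow> v \<in> T y \<longrightarrow> 0 \<le> (x - y) \<bullet> (u - v))"

definition maximal_monotone :: "('a::real_inner \<Rightarrow> 'a set) \<Rightarrow> bool" where
  "maximal_monotone T \<longleftrightarrow> monotone_op T \<and>
     (\<forall>S. monotone_op S \<and> (\<forall>x. T x \<subseteq> S x) \<longrightarrow> S = T)"

definition self_adjoint :: "('a::real_inner \<Rightarrow> 'a) \<Rightarrow> bool" where
  "self_adjoint M \<longleftrightarrow> (\<forall>x y. M x \<bullet> y = x \<bullet> M y)"

definition pos_def :: "('a::real_inner \<Rightarrow> 'a) \<Rightarrow> bool" where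
  "pos_def M \<longleftrightarrow> (\<forall>x. x \<noteq> 0 \<longrightarrow> 0 < x \<bullet> M x)"

definition lambda_max :: "('a::real_inner \<Rightarrow> 'a) \<Rightarrow> real" where
  "lambda_max M = Sup {x \<bullet> M x | x. norm x = 1}"

definition lambda_min :: "('a::real_inner \<Rightarrow> 'a) \<Rightarrow> real" where
  "lambda_min M = Inf {x \<bullet> M x | x. norm x = 1}"

definition normM :: "('a::real_inner \<Rightarrow> 'a) \<Rightarrow> 'a \<Rightarrow> real" where
  "normM M z = sqrt (z \<bullet> M z)"

definition distM :: "('a::real_inner \<Rightarrow> 'a) \<Rightarrow> 'a \<Rightarrow> 'a set \<Rightarrow> real" where
  "distM M z D = Inf {normM M (d - z) | d. d \<in> D}"

text \<open>Resolvent (I + \<sigma> M^{-1} T)^{-1}: w = J(z) iff z \<in> w + \<sigma> M^{-1} T(w),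
  i.e. M (z - w) \<in> \<sigma> T(w).\<close>

definition resolventM :: "real \<Rightarrow> ('a::real_inner \<Rightarrow> 'a) \<Rightarrow> ('a \<Rightarrow> 'a set) \<Rightarrow> 'a \<Rightarrow> 'a" where
  "resolventM \<sigma> M T z = (THE w. M (z - w) \<in> (\<lambda>v. \<sigma> *\<^sub>R v) ` T w)"

definition IGPPAstep_out ::
  "('a::real_inner \<Rightarrow> 'a set) \<Rightarrow> 'a \<Rightarrow> real \<Rightarrow> real \<Rightarrow> real \<Rightarrow> real \<Rightarrow> ('a \<Rightarrow> 'a) \<Rightarrow> 'a \<Rightarrow> bool" where
  "IGPPAstep_out T z \<sigma> \<eta> \<delta> \<gamma> M zplus \<longleftrightarrow>
     (\<exists>w. zplus = \<gamma> *\<^sub>R w + (1 - \<gamma>) *\<^sub>R z \<and>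
          normM M (w - resolventM \<sigma> M T z) \<le> min \<eta> (\<delta> * normM M (w - z)))"

text \<open>dist(0, T z) is +\<infinity> when T z = {}; the inequality is then vacuous.\<close>

definition subreg_bound :: "('a::real_inner \<Rightarrow> 'a set) \<Rightarrow> real \<Rightarrow> real \<Rightarrow> bool" where
  "subreg_bound T r \<kappa> \<longleftrightarrow> (\<forall>z. norm z \<le> r \<longrightarrow> T z \<noteq> {} \<longrightarrow>
      infdist z {x. 0 \<in> T x} \<le> \<kappa> * infdist 0 (T z))"

definition bounded_metric_subregular :: "('a::real_inner \<Rightarrow> 'a set) \<Rightarrow> bool" where
  "bounded_metric_subregular T \<longleftrightarrow> (\<forall>r>0. \<exists>\<kappa>>0. subreg_bound T r \<kappa>)"

end

theory Submission
  imports Defs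
begin

lemma lin_simps:
  assumes "linear M"
  shows "M (x - y) = M x - M y" "M (x + y) = M x + M y" "M (c *\<^sub>R x) = c *\<^sub>R M x" "M 0 = 0"
  using assms by (auto simp: linear_diff linear_add linear_scale linear_0)

lemma sa_swap:
  assumes "self_adjoint M" shows "y \<bullet> M x = x \<bullet> M y"
  using assms unfolding self_adjoint_def by (metis inner_commute)

lemma ipM_nonneg:
  fixes M :: "'a::real_inner \<Rightarrow> 'a"
  assumes "linear M" "pos_def M" shows "0 \<le> x \<bullet> M x"
proof (cases "x = 0")
  case True then show ?thesis using assms(1) by (simp add: linear_0)
next
  case False then show ?thesis using assms(2) unfolding pos_def_def by (metis less_imp_le)
qed

lemma normM_sq:
  assumes "linear M" "pos_def M" shows "(normM M x)\<^sup>2 = x \<bullet> M x"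
  using ipM_nonneg[OF assms] by (simp add: normM_def)

lemma normM_nonneg:
  assumes "linear M" "pos_def M" shows "0 \<le> normM M x"
  using ipM_nonneg[OF assms] by (simp add: normM_def)

lemma normM_scale:
  assumes "linear M" shows "normM M (c *\<^sub>R x) = \<bar>c\<bar> * normM M x"
proof -
  have "(c *\<^sub>R x) \<bullet> M (c *\<^sub>R x) = c\<^sup>2 * (x \<bullet> M x)"
    using assms by (simp add: linear_scale power2_eq_square)
  then show ?thesis by (simp add: normM_def real_sqrt_mult)
qed

lemma normM_neg:
  assumes "linear M" shows "normM M (- x) = normM M x"
  using normM_scale[OF assms, of "-1" x] by simp

lemma normM_commute:
  assumes "linear M" shows "normM M (x - y) = normM M (y - x)"
  using normM_neg[OF assms, of "x - y"] by simp

lemma cs_M: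
  assumes "linear M" "self_adjoint M" "pos_def M"
  shows "\<bar>x \<bullet> M y\<bar> \<le> normM M x * normM M y"
proof -
  define a where "a = x \<bullet> M x"
  define b where "b = x \<bullet> M y"
  define c where "c = y \<bullet> M y"
  have a0: "0 \<le> a" "0 \<le> c" using ipM_nonneg[OF assms(1,3)] a_def c_def by auto
  have q: "0 \<le> a + 2 * t * b + t\<^sup>2 * c" for t
  proof -
    have "0 \<le> (x + t *\<^sub>R y) \<bullet> M (x + t *\<^sub>R y)" by (rule ipM_nonneg[OF assms(1,3)])
    also have "\<dots> = a + 2 * t * b + t\<^sup>2 * c"
      using sa_swap[OF assms(2), of x y] assms(1)
      by (simp add: a_def b_def c_def linear_add linear_scale inner_add_left inner_add_right
          power2_eq_square algebra_simps)
    finally show ?thesis .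
  qed
  have "b\<^sup>2 \<le> a * c"
  proof (cases "c = 0")
    case True
    then have "y = 0" using assms(3) unfolding pos_def_def c_def by force
    then show ?thesis using assms(1) a0 by (simp add: b_def linear_0)
  next
    case False
    then have cp: "c > 0" using a0 by auto
    have "0 \<le> a + 2 * (-b/c) * b + (-b/c)\<^sup>2 * c" by (rule q)
    also have "\<dots> = a - b\<^sup>2 / c" using cp by (simp add: power2_eq_square field_simps)
    finally show ?thesis using cp by (simp add: field_simps)
  qed
  then have "sqrt (b\<^sup>2) \<le> sqrt (a * c)" by (rule real_sqrt_le_mono)
  then show ?thesis by (simp add: normM_def a_def b_def c_def real_sqrt_mult)
qed

lemma normM_triangle:
  assumes "linear M" "self_adjoint M" "pos_def M"
  shows "normM M (x + y) \<le> normM M x + normM M y"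
proof -
  have "(normM M (x + y))\<^sup>2 = x \<bullet> M x + 2 * (x \<bullet> M y) + y \<bullet> M y"
    using normM_sq[OF assms(1,3)] sa_swap[OF assms(2), of x y] assms(1)
    by (simp add: linear_add inner_add_left inner_add_right)
  also have "\<dots> \<le> (normM M x)\<^sup>2 + 2 * (normM M x * normM M y) + (normM M y)\<^sup>2"
    using cs_M[OF assms, of x y] normM_sq[OF assms(1,3)] by auto
  also have "\<dots> = (normM M x + normM M y)\<^sup>2" by (simp add: power2_eq_square algebra_simps)
  finally show ?thesis
    using normM_nonneg[OF assms(1,3)] by (meson add_nonneg_nonneg power2_le_imp_le)
qed

lemma normM_tri_diff:
  assumes "linear M" "self_adjoint M" "pos_def M"
  shows "normM M (x - z) \<le> normM M (x - y) + normM M (y - z)"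
  using normM_triangle[OF assms, of "x - y" "y - z"] by simp

lemma bdd_quad:
  fixes M :: "'a::euclidean_space \<Rightarrow> 'a"
  assumes "linear M"
  shows "bdd_above {x \<bullet> M x | x. norm x = 1}"
proof -
  obtain B where B: "\<And>x. norm (M x) \<le> B * norm x"
    using linear_bounded[OF assms] by blast
  have "x \<bullet> M x \<le> B" if "norm x = 1" for x
  proof -
    have "x \<bullet> M x \<le> norm x * norm (M x)" using norm_cauchy_schwarz by blast
    also have "\<dots> \<le> B" using B[of x] that by simp
    finally show ?thesis .
  qed
  then show ?thesis unfolding bdd_above_def by blast
qed

lemma unit_ex: "\<exists>u::'a::euclidean_space. norm u = 1"
  using norm_Basis SOME_Basis by blast

lemma quad_le_max:
  fixes M :: "'a::euclidean_space \<Rightarrow> 'a"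
  assumes "linear M" "lambda_max M = 1"
  shows "x \<bullet> M x \<le> (norm x)\<^sup>2"
proof (cases "x = 0")
  case True then show ?thesis using assms by (simp add: linear_0)
next
  case False
  define u where "u = (1 / norm x) *\<^sub>R x"
  have nu: "norm u = 1" using False by (simp add: u_def)
  have "u \<bullet> M u \<le> lambda_max M"
    unfolding lambda_max_def using nu by (intro cSup_upper bdd_quad[OF assms(1)]) auto
  moreover have "x \<bullet> M x = (norm x)\<^sup>2 * (u \<bullet> M u)"
    using False assms(1) by (simp add: u_def linear_scale power2_eq_square field_simps)
  ultimately show ?thesis using assms(2)
    by (metis mult_left_le zero_le_power2)
qed

lemma normM_le_norm:
  fixes M :: "'a::euclidean_space \<Rightarrow> 'a"
  assumes "linear M" "lambda_max M = 1"
  shows "normM M x \<le> norm x"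
  unfolding normM_def using quad_le_max[OF assms, of x]
  by (metis norm_ge_zero real_sqrt_abs real_sqrt_le_mono abs_of_nonneg)

lemma lmin_le:
  fixes M :: "'a::euclidean_space \<Rightarrow> 'a"
  assumes "linear M" "pos_def M"
  shows "lambda_min M * (norm x)\<^sup>2 \<le> x \<bullet> M x"
proof (cases "x = 0")
  case True then show ?thesis using assms by (simp add: linear_0)
next
  case False
  define u where "u = (1 / norm x) *\<^sub>R x"
  have nu: "norm u = 1" using False by (simp add: u_def)
  have bb: "bdd_below {x \<bullet> M x | x. norm x = 1}"
    unfolding bdd_below_def using ipM_nonneg[OF assms] by blast
  have "lambda_min M \<le> u \<bullet> M u"
    unfolding lambda_min_def using nu by (intro cInf_lower bb) auto
  moreover have "x \<bullet> M x = (norm x)\<^sup>2 * (u \<bullet> M u)"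
    using False assms(1) by (simp add: u_def linear_scale power2_eq_square field_simps)
  ultimately show ?thesis
    by (metis mult.commute mult_right_mono zero_le_power2)
qed

lemma lmin_pos:
  fixes M :: "'a::euclidean_space \<Rightarrow> 'a"
  assumes "linear M" "pos_def M"
  shows "0 < lambda_min M"
proof -
  have cont: "continuous_on (sphere 0 1) (\<lambda>x. x \<bullet> M x)"
    using linear_continuous_on[OF linear_conv_bounded_linear[THEN iffD1, OF assms(1)]]
    by (intro continuous_intros) auto
  have ne: "sphere (0::'a) 1 \<noteq> {}" using unit_ex[where 'a='a] by auto
  obtain x0 where x0: "x0 \<in> sphere 0 1" "\<And>y. y \<in> sphere 0 1 \<Longrightarrow> x0 \<bullet> M x0 \<le> y \<bullet> M y"
    using continuous_attains_inf[OF compact_sphere ne cont] by blast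
  have "x0 \<noteq> 0" using x0(1) by auto
  then have p: "0 < x0 \<bullet> M x0" using assms(2) unfolding pos_def_def by blast
  have "x0 \<bullet> M x0 \<le> lambda_min M"
    unfolding lambda_min_def using ne x0
    by (intro cInf_greatest) (auto simp: dist_norm)
  then show ?thesis using p by linarith
qed

lemma lmin_le1:
  fixes M :: "'a::euclidean_space \<Rightarrow> 'a"
  assumes "linear M" "pos_def M" "lambda_max M = 1"
  shows "lambda_min M \<le> 1"
proof -
  obtain u :: 'a where u: "norm u = 1" using unit_ex by blast
  show ?thesis using lmin_le[OF assms(1,2), of u] quad_le_max[OF assms(1,3), of u] u by simp
qed

lemma norm_M_le:
  fixes M :: "'a::euclidean_space \<Rightarrow> 'a"
  assumes "linear M" "self_adjoint M" "pos_def M" "lambda_max M = 1"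
  shows "norm (M x) \<le> normM M x"
proof -
  have "(norm (M x))\<^sup>2 = M x \<bullet> M x" by (simp add: power2_norm_eq_inner)
  also have "\<dots> = x \<bullet> M (M x)" using assms(2) unfolding self_adjoint_def by blast
  also have "\<dots> \<le> normM M x * normM M (M x)" using cs_M[OF assms(1-3), of x "M x"] by linarith
  also have "\<dots> \<le> normM M x * norm (M x)"
    by (intro mult_left_mono normM_le_norm[OF assms(1,4)] normM_nonneg[OF assms(1,3)])
  finally have h: "(norm (M x))\<^sup>2 \<le> normM M x * norm (M x)" .
  show ?thesis
  proof (cases "norm (M x) = 0")
    case True then show ?thesis using normM_nonneg[OF assms(1,3)] by simp
  next
    case False
    then have "norm (M x) > 0" by simp
    then show ?thesis using h by (simp add: power2_eq_square)
  qed
qed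

lemma maxmono_mem:
  fixes T :: "'a::real_inner \<Rightarrow> 'a set"
  assumes mm: "maximal_monotone T"
    and h: "\<And>x u. u \<in> T x \<Longrightarrow> 0 \<le> (w - x) \<bullet> (v - u)"
  shows "v \<in> T w"
proof -
  have mT: "monotone_op T" using mm unfolding maximal_monotone_def by blast
  define S where "S = (\<lambda>y. if y = w then insert v (T y) else T y)"
  have "monotone_op S"
    unfolding monotone_op_def
  proof (intro allI impI)
    fix x y u u'
    assume u: "u \<in> S x" and u': "u' \<in> S y"
    show "0 \<le> (x - y) \<bullet> (u - u')"
    proof (cases "x = w \<and> u = v")
      case True
      show ?thesis
      proof (cases "y = w \<and> u' = v")
        case True then show ?thesis using \<open>x = w \<and> u = v\<close> by simp
      next
        case False
        then have "u' \<in> T y" using u' by (auto simp: S_def split: if_splits)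
        then show ?thesis using h[of u' y] True by simp
      qed
    next
      case False
      then have uT: "u \<in> T x" using u by (auto simp: S_def split: if_splits)
      show ?thesis
      proof (cases "y = w \<and> u' = v")
        case True
        have "0 \<le> (w - x) \<bullet> (v - u)" using h[OF uT] .
        also have "(w - x) \<bullet> (v - u) = (x - w) \<bullet> (u - v)" by (simp add: inner_diff_left inner_diff_right)
        finally show ?thesis using True by simp
      next
        case False
        then have "u' \<in> T y" using u' by (auto simp: S_def split: if_splits)
        then show ?thesis using mT uT unfolding monotone_op_def by blast
      qed
    qed
  qed
  moreover have "\<forall>x. T x \<subseteq> S x" by (auto simp: S_def)
  ultimately have "S = T" using mm unfolding maximal_monotone_def by blast
  then show ?thesis by (metis S_def insertI1)
qed

lemma DF_finite:
  fixes G :: "('a::euclidean_space \<times> 'a) set" and \<phi> :: "'a \<Rightarrow> 'a"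
  assumes fin: "finite G" and ne: "G \<noteq> {}"
    and mono: "\<And>g j. g \<in> G \<Longrightarrow> j \<in> G \<Longrightarrow> 0 \<le> (fst g - fst j) \<bullet> (snd g - snd j)"
    and cont: "continuous_on (convex hull (fst ` G)) \<phi>"
  shows "\<exists>w \<in> convex hull (fst ` G). \<forall>g\<in>G. 0 \<le> (w - fst g) \<bullet> (\<phi> w - snd g)"
proof (rule ccontr)
  define C where "C = convex hull (fst ` G)"
  assume "\<not> ?thesis"
  then have neg: "\<And>w. w \<in> C \<Longrightarrow> \<exists>g\<in>G. (w - fst g) \<bullet> (\<phi> w - snd g) < 0"
    unfolding C_def using not_le by blast
  define h where "h g w = (w - fst g) \<bullet> (\<phi> w - snd g)" for g w
  define m where "m g w = max 0 (- h g w)" for g w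
  define N where "N w = (\<Sum>g\<in>G. m g w)" for w
  have m0: "0 \<le> m g w" for g w by (simp add: m_def)
  have Npos: "0 < N w" if wC: "w \<in> C" for w
  proof -
    obtain g where g: "g \<in> G" "h g w < 0" using neg[OF wC] unfolding h_def by blast
    have "0 < m g w" using g by (simp add: m_def)
    also have "m g w \<le> N w" unfolding N_def using g fin m0 by (intro member_le_sum) auto
    finally show ?thesis .
  qed
  define p where "p w = (\<Sum>g\<in>G. (m g w / N w) *\<^sub>R fst g)" for w
  have cC: "compact C" "convex C" "C \<noteq> {}"
    using fin ne by (auto simp: C_def finite_imp_compact_convex_hull convex_convex_hull)
  have contm: "continuous_on C (m g)" for g
    unfolding m_def h_def using cont[folded C_def]
    by (intro continuous_intros) auto
  have contN: "continuous_on C N"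
    unfolding N_def by (intro continuous_on_sum contm)
  have contp: "continuous_on C p"
    unfolding p_def using Npos
    by (intro continuous_on_sum continuous_on_scaleR continuous_on_divide contm contN continuous_on_const) force+
  have sum1: "(\<Sum>g\<in>G. m g w / N w) = 1" if "w \<in> C" for w
    using Npos[OF that] by (simp add: N_def sum_divide_distrib[symmetric])
  have pim: "p \<in> C \<rightarrow> C"
  proof
    fix w assume w: "w \<in> C"
    show "p w \<in> C" unfolding p_def
      by (rule convex_sum[OF fin cC(2) sum1[OF w]])
         (use Npos[OF w] m0 in \<open>auto simp: C_def hull_inc\<close>)
  qed
  obtain w0 where w0: "w0 \<in> C" "p w0 = w0"
    using brouwer[OF cC contp pim] by blast
  define \<beta> where "\<beta> g = m g w0 / N w0" for g
  have b0: "0 \<le> \<beta> g" for g using m0 Npos[OF w0(1)] by (simp add: \<beta>_def)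
  have bs: "(\<Sum>g\<in>G. \<beta> g) = 1" using sum1[OF w0(1)] by (simp add: \<beta>_def)
  have w0s: "w0 = (\<Sum>g\<in>G. \<beta> g *\<^sub>R fst g)" using w0(2) by (simp add: p_def \<beta>_def)
  have A: "(\<Sum>g\<in>G. \<beta> g * h g w0) < (\<Sum>g\<in>G. 0)"
  proof (rule sum_strict_mono_ex1[OF fin])
    show "\<forall>g\<in>G. \<beta> g * h g w0 \<le> 0"
      using Npos[OF w0(1)] by (auto simp: \<beta>_def m_def mult_le_0_iff divide_nonpos_pos max_def)
    obtain g where g: "g \<in> G" "h g w0 < 0" using neg[OF w0(1)] unfolding h_def by blast
    have "\<beta> g > 0" using g Npos[OF w0(1)] by (simp add: \<beta>_def m_def divide_neg_pos)
    then show "\<exists>g\<in>G. \<beta> g * h g w0 < 0" using g by (metis mult_pos_neg)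
  qed
  define \<phi>0 where "\<phi>0 = \<phi> w0"
  have hsplit: "h g w0 = (w0 - fst g) \<bullet> \<phi>0 + (fst g - w0) \<bullet> snd g" for g
    by (simp add: h_def \<phi>0_def inner_diff_left inner_diff_right)
  have z1: "(\<Sum>g\<in>G. \<beta> g *\<^sub>R (w0 - fst g)) = 0"
    using bs w0s by (simp add: scaleR_diff_right sum_subtractf scaleR_sum_left[symmetric])
  have z2: "(\<Sum>g\<in>G. \<beta> g * ((w0 - fst g) \<bullet> \<phi>0)) = 0"
  proof -
    have "(\<Sum>g\<in>G. \<beta> g * ((w0 - fst g) \<bullet> \<phi>0)) = (\<Sum>g\<in>G. \<beta> g *\<^sub>R (w0 - fst g)) \<bullet> \<phi>0"
      by (simp add: inner_sum_left)
    then show ?thesis using z1 by simp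
  qed
  have xg: "fst g - w0 = (\<Sum>j\<in>G. \<beta> j *\<^sub>R (fst g - fst j))" for g
    using bs w0s by (simp add: scaleR_diff_right sum_subtractf scaleR_sum_left[symmetric])
  define S1 where "S1 = (\<Sum>g\<in>G. \<Sum>j\<in>G. \<beta> g * \<beta> j * ((fst g - fst j) \<bullet> snd g))"
  have e1: "(\<Sum>g\<in>G. \<beta> g * ((fst g - w0) \<bullet> snd g)) = S1"
    unfolding S1_def
    by (subst xg) (simp add: inner_sum_left sum_distrib_left mult.assoc)
  have S1': "S1 = (\<Sum>g\<in>G. \<Sum>j\<in>G. \<beta> g * \<beta> j * ((fst j - fst g) \<bullet> snd j))"
    unfolding S1_def by (subst sum.swap) (simp add: mult.commute)
  have "2 * S1 = (\<Sum>g\<in>G. \<Sum>j\<in>G. \<beta> g * \<beta> j * ((fst g - fst j) \<bullet> (snd g - snd j)))"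
  proof -
    have "2 * S1 = S1 + S1" by simp
    also have "\<dots> = (\<Sum>g\<in>G. \<Sum>j\<in>G. \<beta> g * \<beta> j * ((fst g - fst j) \<bullet> snd g)
                     + \<beta> g * \<beta> j * ((fst j - fst g) \<bullet> snd j))"
      by (subst S1', subst S1_def) (simp add: sum.distrib)
    also have "\<dots> = (\<Sum>g\<in>G. \<Sum>j\<in>G. \<beta> g * \<beta> j * ((fst g - fst j) \<bullet> (snd g - snd j)))"
      by (intro sum.cong refl) (simp add: inner_diff_left inner_diff_right algebra_simps)
    finally show ?thesis .
  qed
  also have "\<dots> \<ge> 0"
    using mono b0 by (intro sum_nonneg) (simp add: mult_nonneg_nonneg)
  finally have S1nn: "0 \<le> S1" by simp
  have "(\<Sum>g\<in>G. \<beta> g * h g w0) = (\<Sum>g\<in>G. \<beta> g * ((w0 - fst g) \<bullet> \<phi>0)) + (\<Sum>g\<in>G. \<beta> g * ((fst g - w0) \<bullet> snd g))"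
    by (simp add: hsplit distrib_left sum.distrib)
  also have "\<dots> = S1" using z2 e1 by simp
  finally show False using A S1nn by simp
qed

lemma Omega_closed:
  fixes T :: "'a::euclidean_space \<Rightarrow> 'a set"
  assumes mm: "maximal_monotone T"
  shows "closed {x. 0 \<in> T x}"
proof -
  have mT: "monotone_op T" using mm unfolding maximal_monotone_def by blast
  have "{x. 0 \<in> T x} = (\<Inter>g\<in>{(x, u). u \<in> T x}. {p. 0 \<le> (p - fst g) \<bullet> (0 - snd g)})"
  proof (intro equalityI subsetI)
    fix p assume "p \<in> {x. 0 \<in> T x}"
    then show "p \<in> (\<Inter>g\<in>{(x, u). u \<in> T x}. {p. 0 \<le> (p - fst g) \<bullet> (0 - snd g)})"
      using mT unfolding monotone_op_def by fastforce
  next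
    fix p assume "p \<in> (\<Inter>g\<in>{(x, u). u \<in> T x}. {p. 0 \<le> (p - fst g) \<bullet> (0 - snd g)})"
    then have "0 \<in> T p" by (intro maxmono_mem[OF mm]) force
    then show "p \<in> {x. 0 \<in> T x}" by simp
  qed
  also have "closed \<dots>"
    by (intro closed_INT ballI closed_Collect_le continuous_intros)
  finally show ?thesis .
qed

lemma resolvent_exists:
  fixes T :: "'a::euclidean_space \<Rightarrow> 'a set" and M :: "'a \<Rightarrow> 'a"
  assumes mm: "maximal_monotone T" and lin: "linear M" and pd: "pos_def M"
    and sp: "0 < \<sigma>" and ne: "x0 \<in> {x. 0 \<in> T x}"
  shows "\<exists>w. \<exists>v\<in>T w. M (z - w) = \<sigma> *\<^sub>R v"
proof -
  have mT: "monotone_op T" using mm unfolding maximal_monotone_def by blast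
  define Gr where "Gr = {(x, u). u \<in> T x}"
  define \<phi> where "\<phi> w = (1 / \<sigma>) *\<^sub>R M (z - w)" for w
  define K where "K g = {w. 0 \<le> (w - fst g) \<bullet> (\<phi> w - snd g)}" for g
  have contphi: "continuous_on S \<phi>" for S
  proof -
    have cM: "continuous_on UNIV M"
      using linear_continuous_on[OF linear_conv_bounded_linear[THEN iffD1, OF lin]] .
    have "continuous_on S (\<lambda>w. M (z - w))"
      by (rule continuous_on_compose2[OF cM]) (auto intro!: continuous_intros)
    then show ?thesis unfolding \<phi>_def by (intro continuous_intros)
  qed
  have closedK: "closed (K g)" for g
    unfolding K_def
    by (intro closed_Collect_le continuous_intros contphi)
  define g0 where "g0 = (x0, 0::'a)"
  have g0: "g0 \<in> Gr" using ne by (simp add: g0_def Gr_def)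
  define c where "c = norm (M (z - x0)) / lambda_min M"
  have lp: "0 < lambda_min M" by (rule lmin_pos[OF lin pd])
  have Kb: "K g0 \<subseteq> cball x0 c"
  proof
    fix w assume "w \<in> K g0"
    then have "0 \<le> (w - x0) \<bullet> \<phi> w" by (simp add: K_def g0_def)
    then have h: "0 \<le> (w - x0) \<bullet> M (z - w)" using sp by (simp add: \<phi>_def zero_le_divide_iff)
    have "M (z - w) = M (z - x0) - M (w - x0)" using lin by (simp add: linear_diff[symmetric])
    then have "(w - x0) \<bullet> M (w - x0) \<le> (w - x0) \<bullet> M (z - x0)" using h by (simp add: inner_diff_right)
    also have "\<dots> \<le> norm (w - x0) * norm (M (z - x0))" by (rule norm_cauchy_schwarz)
    finally have "lambda_min M * (norm (w - x0))\<^sup>2 \<le> norm (w - x0) * norm (M (z - x0))"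
      using lmin_le[OF lin pd, of "w - x0"] by linarith
    then have "lambda_min M * norm (w - x0) \<le> norm (M (z - x0))"
      by (cases "norm (w - x0) = 0") (auto simp: power2_eq_square)
    then have "norm (w - x0) \<le> c" using lp by (simp add: c_def field_simps)
    then show "w \<in> cball x0 c" by (simp add: dist_norm norm_minus_commute)
  qed
  have cK: "compact (K g0)"
    using Kb closedK by (meson bounded_cball bounded_subset compact_eq_bounded_closed)
  have "K g0 \<inter> \<Inter>(K ` Gr) \<noteq> {}"
  proof (rule compact_imp_fip[OF cK])
    show "\<And>S. S \<in> K ` Gr \<Longrightarrow> closed S" using closedK by blast
  next
    fix F' assume F': "finite F'" "F' \<subseteq> K ` Gr"
    then obtain G' where G': "G' \<subseteq> Gr" "finite G'" "F' = K ` G'"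
      by (meson finite_subset_image)
    define G where "G = insert g0 G'"
    have GG: "G \<subseteq> Gr" "finite G" "G \<noteq> {}" using G' g0 by (auto simp: G_def)
    have mo: "0 \<le> (fst g - fst j) \<bullet> (snd g - snd j)" if "g \<in> G" "j \<in> G" for g j
    proof -
      have "snd g \<in> T (fst g)" "snd j \<in> T (fst j)" using that GG(1) unfolding Gr_def by auto
      then show ?thesis using mT unfolding monotone_op_def by blast
    qed
    obtain w where w: "\<forall>g\<in>G. 0 \<le> (w - fst g) \<bullet> (\<phi> w - snd g)"
      using DF_finite[OF GG(2,3) mo contphi] by blast
    then have "w \<in> K g0 \<inter> \<Inter>F'" using G' by (auto simp: K_def G_def)
    then show "K g0 \<inter> \<Inter>F' \<noteq> {}" by blast
  qed
  then obtain w where w: "\<And>g. g \<in> Gr \<Longrightarrow> w \<in> K g" by blast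
  have "\<phi> w \<in> T w"
  proof (rule maxmono_mem[OF mm])
    fix x u assume "u \<in> T x"
    then have "(x, u) \<in> Gr" by (simp add: Gr_def)
    then show "0 \<le> (w - x) \<bullet> (\<phi> w - u)" using w by (force simp: K_def)
  qed
  moreover have "M (z - w) = \<sigma> *\<^sub>R \<phi> w" using sp by (simp add: \<phi>_def zero_le_divide_iff)
  ultimately show ?thesis by blast
qed

lemma resolvent_spec:
  fixes T :: "'a::euclidean_space \<Rightarrow> 'a set" and M :: "'a \<Rightarrow> 'a"
  assumes mm: "maximal_monotone T" and lin: "linear M" and pd: "pos_def M"
    and sp: "0 < \<sigma>" and ne: "x0 \<in> {x. 0 \<in> T x}"
  shows "\<exists>v\<in>T (resolventM \<sigma> M T z). M (z - resolventM \<sigma> M T z) = \<sigma> *\<^sub>R v"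
proof -
  have mT: "monotone_op T" using mm unfolding maximal_monotone_def by blast
  have eq: "(M (z - w) \<in> (\<lambda>v. \<sigma> *\<^sub>R v) ` T w) = (\<exists>v\<in>T w. M (z - w) = \<sigma> *\<^sub>R v)" for w
    by auto
  have uniq: "w1 = w2" if H: "\<exists>v\<in>T w1. M (z - w1) = \<sigma> *\<^sub>R v" "\<exists>v\<in>T w2. M (z - w2) = \<sigma> *\<^sub>R v" for w1 w2
  proof (rule ccontr)
    assume nq: "w1 \<noteq> w2"
    obtain v1 v2 where v: "v1 \<in> T w1" "M (z - w1) = \<sigma> *\<^sub>R v1" "v2 \<in> T w2" "M (z - w2) = \<sigma> *\<^sub>R v2"
      using H by blast
    have "0 \<le> (w1 - w2) \<bullet> (v1 - v2)" using mT v unfolding monotone_op_def by blast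
    then have "0 \<le> (w1 - w2) \<bullet> (\<sigma> *\<^sub>R v1 - \<sigma> *\<^sub>R v2)" using sp
      by (simp add: scaleR_diff_right[symmetric])
    also have "\<sigma> *\<^sub>R v1 - \<sigma> *\<^sub>R v2 = - M (w1 - w2)" 
    proof -
      have "\<sigma> *\<^sub>R v1 - \<sigma> *\<^sub>R v2 = (M z - M w1) - (M z - M w2)" using v lin by (simp add: linear_diff)
      also have "\<dots> = - M (w1 - w2)" using lin by (simp add: linear_diff)
      finally show ?thesis .
    qed
    finally have "(w1 - w2) \<bullet> M (w1 - w2) \<le> 0" by simp
    moreover have "w1 - w2 \<noteq> 0" using nq by simp
    ultimately show False using pd unfolding pos_def_def using not_le by blast
  qed
  have ex1: "\<exists>!w. M (z - w) \<in> (\<lambda>v. \<sigma> *\<^sub>R v) ` T w"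
    unfolding eq using resolvent_exists[OF mm lin pd sp ne] uniq by blast
  show ?thesis
    using theI'[OF ex1] unfolding resolventM_def eq .
qed

lemma firm:
  fixes M :: "'a::euclidean_space \<Rightarrow> 'a"
  assumes lin: "linear M" and sa: "self_adjoint M" and pd: "pos_def M"
    and mT: "monotone_op T" and v: "v \<in> T J" "M (z - J) = \<sigma> *\<^sub>R v" and sp: "0 < \<sigma>"
    and p: "0 \<in> T p"
  shows "(normM M (z - J))\<^sup>2 + (normM M (J - p))\<^sup>2 \<le> (normM M (z - p))\<^sup>2"
    and "normM M (J - p) \<le> normM M (z - p)"
    and "normM M (z - J) \<le> normM M (z - p)"
    and "0 \<le> g \<Longrightarrow> g \<le> 2 \<Longrightarrow> normM M (z + g *\<^sub>R (J - z) - p) \<le> normM M (z - p)"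
proof -
  have "0 \<le> (J - p) \<bullet> (v - 0)" using mT v(1) p unfolding monotone_op_def by blast
  then have F1: "0 \<le> (J - p) \<bullet> M (z - J)" using v(2) sp by (simp add: mult_nonneg_nonneg)
  have sw: "(z - J) \<bullet> M (J - p) = (J - p) \<bullet> M (z - J)" using sa_swap[OF sa] by metis
  have ex: "(z - p) \<bullet> M (z - p) = (z - J) \<bullet> M (z - J) + 2 * ((J - p) \<bullet> M (z - J)) + (J - p) \<bullet> M (J - p)"
  proof -
    have "z - p = (z - J) + (J - p)" by simp
    then have "(z - p) \<bullet> M (z - p) = ((z - J) + (J - p)) \<bullet> M ((z - J) + (J - p))" by metis
    also have "\<dots> = (z - J) \<bullet> M (z - J) + (z - J) \<bullet> M (J - p) + (J - p) \<bullet> M (z - J) + (J - p) \<bullet> M (J - p)"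
      using lin by (simp only: linear_add inner_add_left inner_add_right)
    finally show ?thesis using sw by simp
  qed
  show F2: "(normM M (z - J))\<^sup>2 + (normM M (J - p))\<^sup>2 \<le> (normM M (z - p))\<^sup>2"
    using ex F1 by (simp add: normM_sq[OF lin pd])
  have nn: "0 \<le> normM M x" for x by (rule normM_nonneg[OF lin pd])
  show "normM M (J - p) \<le> normM M (z - p)"
  proof -
    have "(normM M (J - p))\<^sup>2 \<le> (normM M (z - p))\<^sup>2" using F2 zero_le_power2[of "normM M (z - J)"] by linarith
    then show ?thesis using nn by (rule power2_le_imp_le)
  qed
  show "normM M (z - J) \<le> normM M (z - p)"
  proof -
    have "(normM M (z - J))\<^sup>2 \<le> (normM M (z - p))\<^sup>2" using F2 zero_le_power2[of "normM M (J - p)"] by linarith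
    then show ?thesis using nn by (rule power2_le_imp_le)
  qed
  assume g: "0 \<le> g" "g \<le> 2"
  define a where "a = z - p"
  define b where "b = z - J"
  have e1: "z + g *\<^sub>R (J - z) - p = a - g *\<^sub>R b" by (simp add: a_def b_def algebra_simps)
  have sab: "b \<bullet> M a = a \<bullet> M b" using sa_swap[OF sa] by metis
  have e2: "(a - g *\<^sub>R b) \<bullet> M (a - g *\<^sub>R b) = a \<bullet> M a - 2 * g * (a \<bullet> M b) + g\<^sup>2 * (b \<bullet> M b)"
    using lin sab by (simp add: linear_diff linear_scale inner_diff_left inner_diff_right power2_eq_square algebra_simps)
  have "a \<bullet> M b = b \<bullet> M b + (J - p) \<bullet> M (z - J)"
  proof -
    have "a = b + (J - p)" by (simp add: a_def b_def)
    then have "a \<bullet> M b = (b + (J - p)) \<bullet> M b" by simp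
    then show ?thesis by (simp only: inner_add_left b_def)
  qed
  then have ab: "b \<bullet> M b \<le> a \<bullet> M b" using F1 by simp
  have bb: "0 \<le> b \<bullet> M b" by (rule ipM_nonneg[OF lin pd])
  have "g\<^sup>2 * (b \<bullet> M b) - 2 * g * (a \<bullet> M b) \<le> g\<^sup>2 * (b \<bullet> M b) - 2 * g * (b \<bullet> M b)"
    using ab g by (simp add: mult_left_mono)
  also have "\<dots> = g * (g - 2) * (b \<bullet> M b)" by (simp add: power2_eq_square algebra_simps)
  also have "\<dots> \<le> 0" using g bb by (simp add: mult_nonneg_nonpos2 mult_nonpos_nonneg mult_nonneg_nonpos)
  finally have "(a - g *\<^sub>R b) \<bullet> M (a - g *\<^sub>R b) \<le> a \<bullet> M a" using e2 by linarith
  then have "(normM M (a - g *\<^sub>R b))\<^sup>2 \<le> (normM M a)\<^sup>2" by (simp add: normM_sq[OF lin pd])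
  then show "normM M (z + g *\<^sub>R (J - z) - p) \<le> normM M (z - p)"
    unfolding e1 a_def using nn by (rule power2_le_imp_le)
qed

lemma ratio:
  fixes s k :: real
  assumes "0 < s" "0 < k"
  shows "0 < 1 - sqrt (k\<^sup>2 / (s\<^sup>2 + k\<^sup>2))"
    and "1 + k / s \<le> 1 / (1 - sqrt (k\<^sup>2 / (s\<^sup>2 + k\<^sup>2)))"
proof -
  define q where "q = sqrt (s\<^sup>2 + k\<^sup>2)"
  have q0: "0 < q" using assms by (simp add: q_def add_pos_pos)
  have th: "sqrt (k\<^sup>2 / (s\<^sup>2 + k\<^sup>2)) = k / q"
    using assms by (simp add: q_def real_sqrt_divide)
  have kq: "k < q"
  proof -
    have "sqrt (k\<^sup>2) < q" unfolding q_def using assms by (intro real_sqrt_less_mono) simp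
    then show ?thesis using assms by simp
  qed
  have qsk: "q \<le> s + k"
  proof -
    have "s\<^sup>2 + k\<^sup>2 \<le> (s + k)\<^sup>2" using assms by (simp add: power2_eq_square algebra_simps)
    then have "q \<le> sqrt ((s + k)\<^sup>2)" unfolding q_def by (rule real_sqrt_le_mono)
    then show ?thesis using assms by simp
  qed
  show "0 < 1 - sqrt (k\<^sup>2 / (s\<^sup>2 + k\<^sup>2))" unfolding th using kq q0 by simp
  have "1 / (1 - k / q) = q / (q - k)" using q0 kq by (simp add: field_simps)
  moreover have "1 + k / s \<le> q / (q - k)"
  proof -
    have "(s + k) * (q - k) \<le> q * s" using qsk assms
    proof -
      have "k * q \<le> k * (s + k)" using qsk assms by (simp add: mult_left_mono)
      then show ?thesis by (simp add: algebra_simps)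
    qed
    then show ?thesis using assms kq by (simp add: field_simps)
  qed
  ultimately show "1 + k / s \<le> 1 / (1 - sqrt (k\<^sup>2 / (s\<^sup>2 + k\<^sup>2)))" using th by simp
qed

theorem proposition1:
  fixes T :: "'a::euclidean_space \<Rightarrow> 'a set"
    and M :: "'a \<Rightarrow> 'a"
    and z :: "nat \<Rightarrow> 'a" and \<sigma> \<eta> :: "nat \<Rightarrow> real"
    and \<gamma> \<delta> r \<kappa> :: real and zbar0 :: 'a
  assumes T_mm: "maximal_monotone T"
    and Omega_ne: "{x. 0 \<in> T x} \<noteq> {}"
    and M_lin: "linear M" and M_sa: "self_adjoint M" and M_pd: "pos_def M"
    and M_max: "lambda_max M = 1"
    and \<gamma>: "0 < \<gamma>" "\<gamma> < 2"
    and \<delta>: "0 \<le> \<delta>" "\<delta> < 1/2"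
    and \<sigma>_nn: "\<forall>k. 0 \<le> \<sigma> k" and \<eta>_nn: "\<forall>k. 0 \<le> \<eta> k"
    and \<eta>_sum: "summable \<eta>"
    and \<sigma>_inf: "(INF k. \<sigma> k) > 0"
    and steps: "\<forall>k. IGPPAstep_out T (z k) (\<sigma> k) (\<eta> k) \<delta> \<gamma> M (z (Suc k))"
    and subreg: "bounded_metric_subregular T"
    and zbar0: "zbar0 \<in> {x. 0 \<in> T x}"
      "normM M (zbar0 - z 0) = distM M (z 0) {x. 0 \<in> T x}"
    and r: "r \<ge> norm zbar0 + (1 / lambda_min M) *
              (distM M (z 0) {x. 0 \<in> T x} + \<gamma> * suminf \<eta>)"
    and \<kappa>: "\<kappa> > 0" "subreg_bound T r \<kappa>"
  shows "\<forall>k. (1 - \<delta>) / \<gamma> * normM M (z (Suc k) - z k) \<le> distM M (z k) {x. 0 \<in> T x}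
           \<and> distM M (z k) {x. 0 \<in> T x} \<le>
             (1 + \<delta>) / (\<gamma> * (1 - sqrt (\<kappa>\<^sup>2 / ((\<sigma> k)\<^sup>2 + \<kappa>\<^sup>2))))
               * normM M (z (Suc k) - z k)"
proof -
  define \<Omega> where "\<Omega> = {x. 0 \<in> T x}"
  note lin = M_lin and sa = M_sa and pd = M_pd
  have mT: "monotone_op T" using T_mm unfolding maximal_monotone_def by blast
  have nn: "0 \<le> normM M x" for x by (rule normM_nonneg[OF lin pd])
  have com: "normM M (x - y) = normM M (y - x)" for x y by (rule normM_commute[OF lin])
  have tri: "normM M (x - y) \<le> normM M (x - w) + normM M (w - y)" for x y w
    by (rule normM_tri_diff[OF lin sa pd])
  have sp: "0 < \<sigma> k" for k
  proof -
    have "(INF k. \<sigma> k) \<le> \<sigma> k"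
      by (rule cINF_lower) (use \<sigma>_nn in \<open>auto simp: bdd_below_def\<close>)
    then show ?thesis using \<sigma>_inf by linarith
  qed
  define J where "J k = resolventM (\<sigma> k) M T (z k)" for k
  have Jv: "\<exists>v\<in>T (J k). M (z k - J k) = \<sigma> k *\<^sub>R v" for k
    unfolding J_def by (rule resolvent_spec[OF T_mm lin pd sp zbar0(1)])
  have "\<forall>k. \<exists>w. z (Suc k) = \<gamma> *\<^sub>R w + (1 - \<gamma>) *\<^sub>R z k \<and>
          normM M (w - J k) \<le> min (\<eta> k) (\<delta> * normM M (w - z k))"
    using steps unfolding IGPPAstep_out_def J_def by blast
  then obtain W where W: "\<And>k. z (Suc k) = \<gamma> *\<^sub>R W k + (1 - \<gamma>) *\<^sub>R z k"
      "\<And>k. normM M (W k - J k) \<le> \<eta> k" "\<And>k. normM M (W k - J k) \<le> \<delta> * normM M (W k - z k)"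
    by (metis min.bounded_iff)
  have Jp: "normM M (J k - p) \<le> normM M (z k - p)" "normM M (z k - J k) \<le> normM M (z k - p)"
     if "p \<in> \<Omega>" for k p
  proof -
    obtain v where v: "v \<in> T (J k)" "M (z k - J k) = \<sigma> k *\<^sub>R v" using Jv[of k] by blast
    have p0: "0 \<in> T p" using that unfolding \<Omega>_def by simp
    show "normM M (J k - p) \<le> normM M (z k - p)" using firm(2)[OF lin sa pd mT v(1) v(2) sp[of k] p0] .
    show "normM M (z k - J k) \<le> normM M (z k - p)" using firm(3)[OF lin sa pd mT v(1) v(2) sp[of k] p0] .
  qed
  have Jrel: "normM M (z k + \<gamma> *\<^sub>R (J k - z k) - p) \<le> normM M (z k - p)" if "p \<in> \<Omega>" for k p
  proof -
    obtain v where v: "v \<in> T (J k)" "M (z k - J k) = \<sigma> k *\<^sub>R v" using Jv[of k] by blast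
    have p0: "0 \<in> T p" using that unfolding \<Omega>_def by simp
    show ?thesis using firm(4)[OF lin sa pd mT v(1) v(2) sp[of k] p0] \<gamma> by simp
  qed
  have D: "z (Suc k) - z k = \<gamma> *\<^sub>R (W k - z k)" for k
    using W(1)[of k] by (simp add: algebra_simps)
  have nD: "normM M (z (Suc k) - z k) = \<gamma> * normM M (W k - z k)" for k
    using D[of k] normM_scale[OF lin] \<gamma> by simp
  define D0 where "D0 = distM M (z 0) \<Omega>"
  have fej: "normM M (z k - zbar0) \<le> D0 + \<gamma> * (\<Sum>i<k. \<eta> i)" for k
  proof (induction k)
    case 0 then show ?case using zbar0(2) com by (simp add: D0_def \<Omega>_def)
  next
    case (Suc k)
    have "z (Suc k) - zbar0 = (z k + \<gamma> *\<^sub>R (J k - z k) - zbar0) + \<gamma> *\<^sub>R (W k - J k)"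
      using W(1)[of k] by (simp add: algebra_simps)
    then have "normM M (z (Suc k) - zbar0) \<le> normM M (z k + \<gamma> *\<^sub>R (J k - z k) - zbar0) + normM M (\<gamma> *\<^sub>R (W k - J k))"
      using normM_triangle[OF lin sa pd] by metis
    also have "\<dots> \<le> normM M (z k - zbar0) + \<gamma> * \<eta> k"
    proof -
      have "\<gamma> * normM M (W k - J k) \<le> \<gamma> * \<eta> k" using W(2)[of k] \<gamma> by (simp add: mult_left_mono)
      moreover have "normM M (\<gamma> *\<^sub>R (W k - J k)) = \<gamma> * normM M (W k - J k)"
        using normM_scale[OF lin] \<gamma> by simp
      moreover have "normM M (z k + \<gamma> *\<^sub>R (J k - z k) - zbar0) \<le> normM M (z k - zbar0)"
        using Jrel[where k=k and p=zbar0] zbar0(1) by (simp add: \<Omega>_def)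
      ultimately show ?thesis by linarith
    qed
    also have "\<dots> \<le> D0 + \<gamma> * (\<Sum>i<Suc k. \<eta> i)" using Suc \<gamma> by (simp add: distrib_left)
    finally show ?case .
  qed
  have lp: "0 < lambda_min M" by (rule lmin_pos[OF lin pd])
  have l1: "lambda_min M \<le> 1" by (rule lmin_le1[OF lin pd M_max])
  have Jnorm: "norm (J k) \<le> r" for k
  proof -
    have "(\<Sum>i<k. \<eta> i) \<le> suminf \<eta>"
      by (rule sum_le_suminf[OF \<eta>_sum]) (use \<eta>_nn in auto)
    then have "\<gamma> * (\<Sum>i<k. \<eta> i) \<le> \<gamma> * suminf \<eta>" using \<gamma> by (simp add: mult_left_mono)
    moreover have "normM M (J k - zbar0) \<le> normM M (z k - zbar0)"
      using Jp(1)[where k=k and p=zbar0] zbar0(1) unfolding \<Omega>_def by simp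
    ultimately have "normM M (J k - zbar0) \<le> D0 + \<gamma> * suminf \<eta>"
      using fej[of k] by linarith
    moreover have "lambda_min M * norm (J k - zbar0) \<le> normM M (J k - zbar0)"
    proof -
      have "(lambda_min M * norm (J k - zbar0))\<^sup>2 \<le> lambda_min M * (norm (J k - zbar0))\<^sup>2"
      proof -
        have "(lambda_min M * norm (J k - zbar0))\<^sup>2 = lambda_min M * (lambda_min M * (norm (J k - zbar0))\<^sup>2)"
          by (simp add: power2_eq_square)
        also have "\<dots> \<le> 1 * (lambda_min M * (norm (J k - zbar0))\<^sup>2)"
          using lp l1 by (intro mult_right_mono) simp_all
        finally show ?thesis by simp
      qed
      also have "\<dots> \<le> (normM M (J k - zbar0))\<^sup>2"
        using lmin_le[OF lin pd] normM_sq[OF lin pd] by simp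
      finally show ?thesis using nn by (rule power2_le_imp_le)
    qed
    ultimately have "norm (J k - zbar0) \<le> (1 / lambda_min M) * (D0 + \<gamma> * suminf \<eta>)"
      using lp by (simp add: field_simps)
    moreover have "norm (J k) \<le> norm zbar0 + norm (J k - zbar0)"
      by (metis add.commute diff_add_cancel norm_triangle_ineq)
    ultimately show ?thesis using r unfolding D0_def \<Omega>_def by linarith
  qed
  have Omega_cl: "closed \<Omega>" unfolding \<Omega>_def by (rule Omega_closed[OF T_mm])
  have Omne: "\<Omega> \<noteq> {}" using Omega_ne by (simp add: \<Omega>_def)
  have bddb: "bdd_below {normM M (d - x) | d. d \<in> \<Omega>}" for x
    unfolding bdd_below_def using nn by blast
  show ?thesis
  proof (intro allI conjI)
    fix k
    have lowJ: "normM M (J k - z k) \<le> distM M (z k) \<Omega>"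
      unfolding distM_def
    proof (rule cInf_greatest)
      show "{normM M (d - z k) |d. d \<in> \<Omega>} \<noteq> {}" using Omne by blast
      fix x assume "x \<in> {normM M (d - z k) |d. d \<in> \<Omega>}"
      then obtain d where d: "d \<in> \<Omega>" "x = normM M (d - z k)" by blast
      show "normM M (J k - z k) \<le> x" using Jp(2)[OF d(1), of k] d(2) com by metis
    qed
    have "normM M (W k - z k) \<le> normM M (W k - J k) + normM M (J k - z k)" by (rule tri)
    then have "(1 - \<delta>) * normM M (W k - z k) \<le> normM M (J k - z k)"
      using W(3)[of k] by (simp add: algebra_simps)
    then show "(1 - \<delta>) / \<gamma> * normM M (z (Suc k) - z k) \<le> distM M (z k) {x. 0 \<in> T x}"
      using lowJ nD[of k] \<gamma> unfolding \<Omega>_def by simp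
    obtain v where v: "v \<in> T (J k)" "M (z k - J k) = \<sigma> k *\<^sub>R v" using Jv[of k] by blast
    obtain p where p: "p \<in> \<Omega>" "\<And>y. y \<in> \<Omega> \<Longrightarrow> dist (J k) p \<le> dist (J k) y"
      using distance_attains_inf[OF Omega_cl Omne, of "J k"] by blast
    have "dist (J k) p \<le> infdist (J k) \<Omega>"
      unfolding infdist_notempty[OF Omne] using Omne p(2) by (intro cINF_greatest) auto
    also have "\<dots> \<le> \<kappa> * infdist 0 (T (J k))"
      using \<kappa>(2) Jnorm[of k] v(1) unfolding subreg_bound_def \<Omega>_def by blast
    also have "\<dots> \<le> \<kappa> * norm v"
      using infdist_le[OF v(1), of 0] \<kappa>(1) by (simp add: mult_left_mono)
    also have "norm v = norm (M (z k - J k)) / \<sigma> k"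
      using v(2) sp[of k] by simp
    also have "\<dots> \<le> normM M (z k - J k) / \<sigma> k"
      using norm_M_le[OF lin sa pd M_max] sp[of k] by (simp add: divide_right_mono)
    finally have pJ: "dist (J k) p \<le> \<kappa> * (normM M (z k - J k) / \<sigma> k)"
      using \<kappa>(1) by (simp add: mult_left_mono)
    have "normM M (J k - p) \<le> norm (J k - p)" by (rule normM_le_norm[OF lin M_max])
    then have pJ': "normM M (J k - p) \<le> \<kappa> / \<sigma> k * normM M (z k - J k)"
      using pJ by (simp add: dist_norm)
    have "distM M (z k) \<Omega> \<le> normM M (p - z k)"
      unfolding distM_def using p(1) by (intro cInf_lower bddb) blast
    also have "\<dots> \<le> normM M (p - J k) + normM M (J k - z k)" by (rule tri)
    also have "\<dots> \<le> (1 + \<kappa> / \<sigma> k) * normM M (z k - J k)"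
      using pJ' com[of p "J k"] com[of "J k" "z k"] by (simp add: algebra_simps)
    finally have up1: "distM M (z k) \<Omega> \<le> (1 + \<kappa> / \<sigma> k) * normM M (z k - J k)" .
    have "normM M (z k - J k) \<le> normM M (z k - W k) + normM M (W k - J k)" by (rule tri)
    also have "\<dots> \<le> (1 + \<delta>) * normM M (W k - z k)"
      using W(3)[of k] com[of "z k" "W k"] by (simp add: algebra_simps)
    finally have a1: "normM M (z k - J k) \<le> (1 + \<delta>) * normM M (W k - z k)" .
    define th where "th = 1 - sqrt (\<kappa>\<^sup>2 / ((\<sigma> k)\<^sup>2 + \<kappa>\<^sup>2))"
    have th0: "0 < th" and thb: "1 + \<kappa> / \<sigma> k \<le> 1 / th"
      using ratio[OF sp[of k] \<kappa>(1)] by (simp_all add: th_def)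
    have kk: "0 \<le> 1 + \<kappa> / \<sigma> k" using \<kappa>(1) sp[of k] by simp
    have "distM M (z k) \<Omega> \<le> (1 + \<kappa> / \<sigma> k) * ((1 + \<delta>) * normM M (W k - z k))"
      using up1 a1 kk by (meson mult_left_mono order_trans)
    also have "\<dots> \<le> (1 / th) * ((1 + \<delta>) * normM M (W k - z k))"
      using thb \<delta> nn by (intro mult_right_mono) simp_all
    also have "\<dots> = (1 + \<delta>) / (\<gamma> * th) * normM M (z (Suc k) - z k)"
      using nD[of k] \<gamma> th0 by (simp add: field_simps)
    finally show "distM M (z k) {x. 0 \<in> T x} \<le>
             (1 + \<delta>) / (\<gamma> * (1 - sqrt (\<kappa>\<^sup>2 / ((\<sigma> k)\<^sup>2 + \<kappa>\<^sup>2))))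
               * normM M (z (Suc k) - z k)" unfolding th_def \<Omega>_def .
  qed
qed

end
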